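(* Let $q,h,K$ be complex numbers with $K(1+q)\neq1$, and set $K'=K\big(K(1+q)-1\big)^{-1}$. For any complex $L$ let $$\hat R(L;q,h)=\begin{pmatrix}1&0&0&Lh\\0&1-L&Lq&0\\0&L&1-Lq&0\\0&0&0&1-L(q+1)\end{pmatrix},\qquad R(L;q,h)=P\hat R(L;q,h).$$ Then $R(K';q,h)$ is invertible and $$P\,R(K;q,h)\,P=\big(R(K';q,h)\big)^{-1}.$$ In particular, for $K=2(1+q)^{-1}$ (assuming $q\neq-1$) one has $K'=K$ and $\hat R(K;q,h)^2=I_4$.
   Context: Matrices are written in the ordered basis $e_1\otimes e_1,e_1\otimes e_2,e_2\otimes e_1,e_2\otimes e_2$ of $\mathbb{C}^2\otimes\mathbb{C}^2$; $P$ is the flip matrix, i.e. the $4\times4$ permutation matrix swapping the second and third basis vectors. The matrix $PRP$ is what the paper denotes $(21)R$. *)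

theory Defs
  imports "Jordan_Normal_Form.Matrix" "Jordan_Normal_Form.Determinant"
begin

text \<open>Matrices in the ordered basis e1 x e1, e1 x e2, e2 x e1, e2 x e2.\<close>

definition flipP :: "complex mat" where
  "flipP = mat_of_rows_list 4
     [[1,0,0,0],
      [0,0,1,0],
      [0,1,0,0],
      [0,0,0,1]]"

definition Rhat :: "complex \<Rightarrow> complex \<Rightarrow> complex \<Rightarrow> complex mat" where
  "Rhat L q h = mat_of_rows_list 4
     [[1, 0, 0, L * h],
      [0, 1 - L, L * q, 0],
      [0, L, 1 - L * q, 0],
      [0, 0, 0, 1 - L * (q + 1)]]"

definition Rmat :: "complex \<Rightarrow> complex \<Rightarrow> complex \<Rightarrow> complex mat" where
  "Rmat L q h = flipP * Rhat L q h"

definition Kprime :: "complex \<Rightarrow> complex \<Rightarrow> complex" where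
  "Kprime K q = K * inverse (K * (1 + q) - 1)"

end

theory Submission imports Defs begin
lemma Rhat_mul: "Rhat A q h * Rhat B q h = mat_of_rows_list 4
  [[1,0,0, B*h + A*h*(1 - B*(q+1))],
   [0,(1-A)*(1-B)+A*q*B, (1-A)*B*q + A*q*(1-B*q),0],
   [0,A*(1-B)+(1-A*q)*B, A*B*q+(1-A*q)*(1-B*q),0],
   [0,0,0,(1-A*(q+1))*(1-B*(q+1))]]"
  apply (rule eq_matI)
  apply (auto simp: Rhat_def mat_of_rows_list_def scalar_prod_def less_Suc_eq numeral_eq_Suc algebra_simps)
  done
lemma flip_sq: "flipP * flipP = 1\<^sub>m 4"
  apply (rule eq_matI)
  apply (auto simp: flipP_def mat_of_rows_list_def scalar_prod_def less_Suc_eq numeral_eq_Suc)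
  done
lemma one4: "1\<^sub>m 4 = (mat_of_rows_list 4 [[1,0,0,0],[0,1,0,0],[0,0,1,0],[0,0,0,1]] :: complex mat)"
  apply (rule eq_matI)
  apply (auto simp: mat_of_rows_list_def less_Suc_eq numeral_eq_Suc)
  done
lemma carr_R: "Rhat A q h \<in> carrier_mat 4 4" unfolding Rhat_def mat_of_rows_list_def by (intro carrier_matI) (simp_all only: dim_row_mat dim_col_mat list.size numeral_eq_Suc, simp_all)
lemma carr_P: "flipP \<in> carrier_mat 4 4" unfolding flipP_def mat_of_rows_list_def by (intro carrier_matI) (simp_all only: dim_row_mat dim_col_mat list.size numeral_eq_Suc, simp_all)
lemma inv_pair:
  assumes "A + B = A * B * (1+q)"
  shows "Rhat A q h * Rhat B q h = 1\<^sub>m 4"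
proof -
  have "B*h + A*h*(1 - B*(q+1)) = h*(A+B - A*B*(1+q))" by (simp add: algebra_simps)
  hence e1: "B*h + A*h*(1 - B*(q+1)) = 0" using assms by simp
  have "(1-A)*(1-B)+A*q*B = 1 - (A+B - A*B*(1+q))" by (simp add: algebra_simps)
  hence e2: "(1-A)*(1-B)+A*q*B = 1" using assms by simp
  have "(1-A)*B*q + A*q*(1-B*q) = q*(A+B - A*B*(1+q))" by (simp add: algebra_simps)
  hence e3: "(1-A)*B*q + A*q*(1-B*q) = 0" using assms by simp
  have "A*(1-B)+(1-A*q)*B = (A+B - A*B*(1+q))" by (simp add: algebra_simps)
  hence e4: "A*(1-B)+(1-A*q)*B = 0" using assms by simp
  have "A*B*q+(1-A*q)*(1-B*q) = 1 - q*(A+B - A*B*(1+q))" by (simp add: algebra_simps)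
  hence e5: "A*B*q+(1-A*q)*(1-B*q) = 1" using assms by simp
  have "(1-A*(q+1))*(1-B*(q+1)) = 1 - (1+q)*(A+B - A*B*(1+q))" by (simp add: algebra_simps)
  hence e6: "(1-A*(q+1))*(1-B*(q+1)) = 1" using assms by simp
  show ?thesis unfolding Rhat_mul e1 e2 e3 e4 e5 e6 one4 by (rule refl)
qed

theorem mainTheorem11:
  fixes q h K :: complex
  assumes "K * (1 + q) \<noteq> 1"
  shows "invertible_mat (Rmat (Kprime K q) q h)
       \<and> inverts_mat (Rmat (Kprime K q) q h) (flipP * Rmat K q h * flipP)
       \<and> inverts_mat (flipP * Rmat K q h * flipP) (Rmat (Kprime K q) q h)
       \<and> (q \<noteq> -1 \<longrightarrow>
            (let K0 = 2 * inverse (1 + q) in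
               Kprime K0 q = K0 \<and> Rhat K0 q h * Rhat K0 q h = 1\<^sub>m 4))"
proof -
  let ?K' = "Kprime K q"
  have d: "K * (1 + q) - 1 \<noteq> 0" using assms by simp
  have rel: "?K' + K = ?K' * K * (1+q)" "K + ?K' = K * ?K' * (1+q)"
    using d unfolding Kprime_def by (simp_all add: field_simps)
  have m1: "Rhat ?K' q h * Rhat K q h = 1\<^sub>m 4" by (rule inv_pair[OF rel(1)])
  have m2: "Rhat K q h * Rhat ?K' q h = 1\<^sub>m 4" by (rule inv_pair[OF rel(2)])
  have PRP: "flipP * Rmat K q h * flipP = Rhat K q h * flipP"
    unfolding Rmat_def using carr_P carr_R flip_sq
    by (metis assoc_mult_mat left_mult_one_mat mult_carrier_mat)
  have a1: "Rmat ?K' q h * (flipP * Rmat K q h * flipP) = 1\<^sub>m 4"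
  proof -
    have "Rmat ?K' q h * (Rhat K q h * flipP) = flipP * (Rhat ?K' q h * (Rhat K q h * flipP))"
      unfolding Rmat_def by (rule assoc_mult_mat[OF carr_P carr_R mult_carrier_mat[OF carr_R carr_P]])
    also have "Rhat ?K' q h * (Rhat K q h * flipP) = (Rhat ?K' q h * Rhat K q h) * flipP"
      by (rule assoc_mult_mat[symmetric, OF carr_R carr_R carr_P])
    finally have "Rmat ?K' q h * (Rhat K q h * flipP) = flipP * ((Rhat ?K' q h * Rhat K q h) * flipP)" .
    also have "\<dots> = 1\<^sub>m 4" using m1 flip_sq carr_P by simp
    finally show ?thesis using PRP by simp
  qed
  have a2: "(flipP * Rmat K q h * flipP) * Rmat ?K' q h = 1\<^sub>m 4"
  proof -
    have "(Rhat K q h * flipP) * Rmat ?K' q h = Rhat K q h * (flipP * (flipP * Rhat ?K' q h))"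
      unfolding Rmat_def by (rule assoc_mult_mat[OF carr_R carr_P mult_carrier_mat[OF carr_P carr_R]])
    also have "flipP * (flipP * Rhat ?K' q h) = (flipP * flipP) * Rhat ?K' q h"
      by (rule assoc_mult_mat[symmetric, OF carr_P carr_P carr_R])
    finally have "(Rhat K q h * flipP) * Rmat ?K' q h = Rhat K q h * ((flipP * flipP) * Rhat ?K' q h)" .
    also have "\<dots> = 1\<^sub>m 4" using m2 flip_sq by (simp add: left_mult_one_mat[OF carr_R])
    finally show ?thesis using PRP by simp
  qed
  have c1: "Rmat ?K' q h \<in> carrier_mat 4 4" unfolding Rmat_def by (rule mult_carrier_mat[OF carr_P carr_R])
  have c2: "flipP * Rmat K q h * flipP \<in> carrier_mat 4 4" unfolding Rmat_def
    by (rule mult_carrier_mat[OF mult_carrier_mat[OF carr_P mult_carrier_mat[OF carr_P carr_R]] carr_P])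
  have i1: "inverts_mat (Rmat ?K' q h) (flipP * Rmat K q h * flipP)"
    unfolding inverts_mat_def using a1 by (simp add: Rmat_def carrier_matD[OF carr_P])
  have i2: "inverts_mat (flipP * Rmat K q h * flipP) (Rmat ?K' q h)"
    unfolding inverts_mat_def using a2 by (simp add: Rmat_def carrier_matD[OF carr_P])
  have inv: "invertible_mat (Rmat ?K' q h)"
    unfolding invertible_mat_def using i1 i2 c1 c2 by auto
  have last: "q \<noteq> -1 \<longrightarrow>
            (let K0 = 2 * inverse (1 + q) in
               Kprime K0 q = K0 \<and> Rhat K0 q h * Rhat K0 q h = 1\<^sub>m 4)"
  proof
    assume q: "q \<noteq> -1"
    hence q1: "1 + q \<noteq> 0" by (metis add.commute add_eq_0_iff)
    define K0 where "K0 = 2 * inverse (1 + q)"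
    have "K0 * (1 + q) = 2" using q1 by (simp add: K0_def)
    hence kp: "Kprime K0 q = K0" unfolding Kprime_def by simp
    have "K0 + K0 = K0 * K0 * (1+q)" using \<open>K0 * (1 + q) = 2\<close> by (simp add: algebra_simps)
    from inv_pair[OF this] kp show "let K0 = 2 * inverse (1 + q) in
               Kprime K0 q = K0 \<and> Rhat K0 q h * Rhat K0 q h = 1\<^sub>m 4"
      unfolding K0_def Let_def by simp
  qed
  show ?thesis using inv i1 i2 last by blast
qed
end
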